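(* Let $\alpha\in(0,1)$, $\lambda\in(0,\tfrac12)$, and let $\Gamma^*$ be defined by the exponential formula $\Gamma^*=\sum_{j\ge0}\frac1{j!}\sum_{\mathbf n_1,\dots,\mathbf n_j}\pi^{(\mathbf n_1)}\cdots\pi^{(\mathbf n_j)}D^{(\mathbf n_1)}\cdots D^{(\mathbf n_j)}$ from a family $\{\pi^{(\mathbf n)}\}_{\mathbf n\in\mathbb N_0^{1+d}}\subset\mathsf T^*$ with $\pi^{(\mathbf n)}_\beta\ne0\Rightarrow|\beta|>|\mathbf n|$. Then for all multiindices $\beta,\gamma$ (not necessarily populated): (a) $(\Gamma^* )_\beta^\gamma$, as a function of the coefficients $\{\pi^{(\mathbf n)}_{\beta'}\}$, does not depend on $\pi^{(\mathbf n)}_{\beta'}$ unless $|\beta'|_\prec\le|\beta|_\prec$; (b) if $\sum_\ell\gamma(\ell)>0$, then $(\Gamma^* )_\beta^\gamma$ does not depend on $\pi^{(\mathbf n)}_{\beta'}$ unless $|\beta'|_\prec<|\beta|_\prec$; (c) $(\Gamma^*-\mathrm{id})_\beta^\gamma\ne0$ implies $|\gamma|_\prec<|\beta|_\prec$ and $|\gamma|<|\beta|$.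
   Context: Multiindices: finitely supported maps $\beta:\mathbb N_0\,\dot\cup\,\mathbb N_0\,\dot\cup\,(\mathbb N_0^{1+d}\setminus\{\mathbf0\})\to\mathbb N_0$ (elements $k$ of the first copy, $\ell$ of the second, $\mathbf n$ of the third). Monomials $\mathsf z^\beta=\prod_k\mathsf a_k^{\beta(k)}\prod_\ell\mathsf b_\ell^{\beta(\ell)}\prod_{\mathbf n\ne\mathbf0}\mathsf p_{\mathbf n}^{\beta(\mathbf n)}$ in the formal power series ring $\mathbb R[[\mathsf a_k,\mathsf b_\ell,\mathsf p_{\mathbf n}]]$; matrix coefficients $A\mathsf z^\gamma=\sum_\beta A_\beta^\gamma\mathsf z^\beta$. With $\mathfrak s=(4,1,\dots,1)$, $|\mathbf n|:=\sum_i\mathfrak s_i\mathbf n_i$; $[\beta]:=\sum_kk\beta(k)+\sum_\ell\ell\beta(\ell)-\sum_{\mathbf n\ne\mathbf0}\beta(\mathbf n)$, $|\beta|_p:=\sum_{\mathbf n\ne\mathbf0}|\mathbf n|\beta(\mathbf n)$, homogeneity $|\beta|:=\alpha(1+[\beta])+|\beta|_p$; weighted length $|\beta|_\prec:=\sum_k\beta(k)+\sum_\ell\beta(\ell)+\lambda\sum_{\mathbf n\ne\mathbf0}|\mathbf n|\beta(\mathbf n)$. $\beta$ is populated if $1+\sum_kk\beta(k)+\sum_\ell\ell\beta(\ell)=\sum_\ell\beta(\ell)+\sum_{\mathbf n\ne\mathbf0}\beta(\mathbf n)$ and ($\beta=g_{\mathbf n}$ for some $\mathbf n\neq\mathbf0$,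 or $\sum_\ell\beta(\ell)>0$); $\mathsf T^*:=\{\pi:\pi_\beta\ne0\Rightarrow\beta\text{ populated}\}$. Derivations: $D^{(\mathbf0)}:=\sum_k(k+1)\mathsf a_{k+1}\partial_{\mathsf a_k}+\sum_\ell(\ell+1)\mathsf b_{\ell+1}\partial_{\mathsf b_\ell}$, $D^{(\mathbf n)}:=\partial_{\mathsf p_{\mathbf n}}$ for $\mathbf n\ne\mathbf0$. (Under these assumptions all matrix coefficients of $\Gamma^*$ are finite sums.) *)

theory Defs
  imports "HOL-Analysis.Analysis"
begin

text \<open>Variables of the power series ring: a_k, b_l, p_n.  The index n of p_n is an
element of N_0^(1+d), represented as a list of length 1+d (entry 0 is the time component,
which carries scaling weight 4).\<close>

datatype var = VA nat | VB nat | VP "nat list"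

type_synonym mi = "var \<Rightarrow> nat"
type_synonym ps = "mi \<Rightarrow> real"

definition zeroidx :: "nat \<Rightarrow> nat list" where
  "zeroidx d = replicate (Suc d) 0"

definition Idx :: "nat \<Rightarrow> nat list set" where
  "Idx d = {n. length n = Suc d}"

definition NZIdx :: "nat \<Rightarrow> nat list set" where
  "NZIdx d = {n. length n = Suc d \<and> n \<noteq> zeroidx d}"

definition multiindex :: "nat \<Rightarrow> mi \<Rightarrow> bool" where
  "multiindex d \<beta> \<longleftrightarrow> finite {v. \<beta> v \<noteq> 0} \<and> (\<forall>n. \<beta> (VP n) \<noteq> 0 \<longrightarrow> n \<in> NZIdx d)"

definition wsum :: "(var \<Rightarrow> real) \<Rightarrow> mi \<Rightarrow> real" where
  "wsum w \<beta> = (\<Sum>v\<in>{v. \<beta> v \<noteq> 0}. w v * real (\<beta> v))"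

definition nnorm :: "nat list \<Rightarrow> real" where
  "nnorm n = real (4 * hd n + sum_list (tl n))"

definition bracket :: "mi \<Rightarrow> real" where
  "bracket \<beta> = wsum (\<lambda>v. case v of VA k \<Rightarrow> real k | VB l \<Rightarrow> real l | VP n \<Rightarrow> -1) \<beta>"

definition pnorm :: "mi \<Rightarrow> real" where
  "pnorm \<beta> = wsum (\<lambda>v. case v of VP n \<Rightarrow> nnorm n | _ \<Rightarrow> 0) \<beta>"

definition hom :: "real \<Rightarrow> mi \<Rightarrow> real" where
  "hom \<alpha> \<beta> = \<alpha> * (1 + bracket \<beta>) + pnorm \<beta>"

definition wlen :: "real \<Rightarrow> mi \<Rightarrow> real" where
  "wlen lam \<beta> = wsum (\<lambda>v. case v of VA _ \<Rightarrow> 1 | VB _ \<Rightarrow> 1 | VP n \<Rightarrow> lam * nnorm n) \<beta>"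

definition gidx :: "nat list \<Rightarrow> mi" where
  "gidx n = (\<lambda>v. if v = VP n then 1 else 0)"

definition populated :: "nat \<Rightarrow> mi \<Rightarrow> bool" where
  "populated d \<beta> \<longleftrightarrow>
     1 + wsum (\<lambda>v. case v of VA k \<Rightarrow> real k | VB l \<Rightarrow> real l | VP _ \<Rightarrow> 0) \<beta>
       = wsum (\<lambda>v. case v of VA _ \<Rightarrow> 0 | VB _ \<Rightarrow> 1 | VP _ \<Rightarrow> 1) \<beta>
     \<and> ((\<exists>n\<in>NZIdx d. \<beta> = gidx n) \<or> (\<exists>l. \<beta> (VB l) > 0))"

definition Tstar :: "nat \<Rightarrow> ps \<Rightarrow> bool" where
  "Tstar d \<pi> \<longleftrightarrow> (\<forall>\<beta>. \<pi> \<beta> \<noteq> 0 \<longrightarrow> multiindex d \<beta> \<and> populated d \<beta>)"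

definition monom :: "mi \<Rightarrow> ps" where
  "monom \<gamma> = (\<lambda>\<beta>. if \<beta> = \<gamma> then 1 else 0)"

definition ps_one :: ps where
  "ps_one = monom (\<lambda>_. 0)"

definition ps_times :: "ps \<Rightarrow> ps \<Rightarrow> ps" where
  "ps_times f g = (\<lambda>\<beta>. \<Sum>\<beta>1\<in>{\<beta>1. \<forall>v. \<beta>1 v \<le> \<beta> v}. f \<beta>1 * g (\<lambda>v. \<beta> v - \<beta>1 v))"

text \<open>D^(0) = sum_k (k+1) a_(k+1) d/da_k + sum_l (l+1) b_(l+1) d/db_l\<close>
definition D0 :: "ps \<Rightarrow> ps" where
  "D0 f = (\<lambda>\<beta>.
     (\<Sum>k\<in>{k. 0 < \<beta> (VA (Suc k))}. real (k + 1) * real (\<beta> (VA k) + 1) *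
         f (\<beta>(VA (Suc k) := \<beta> (VA (Suc k)) - 1, VA k := \<beta> (VA k) + 1)))
   + (\<Sum>l\<in>{l. 0 < \<beta> (VB (Suc l))}. real (l + 1) * real (\<beta> (VB l) + 1) *
         f (\<beta>(VB (Suc l) := \<beta> (VB (Suc l)) - 1, VB l := \<beta> (VB l) + 1))))"

text \<open>D^(n) = d/dp_n for n \<noteq> 0\<close>
definition Dp :: "nat list \<Rightarrow> ps \<Rightarrow> ps" where
  "Dp n f = (\<lambda>\<beta>. real (\<beta> (VP n) + 1) * f (\<beta>(VP n := \<beta> (VP n) + 1)))"

definition Dop :: "nat \<Rightarrow> nat list \<Rightarrow> ps \<Rightarrow> ps" where
  "Dop d n = (if n = zeroidx d then D0 else Dp n)"

text \<open>Gamma^* = sum_j 1/j! sum_(n_1..n_j) pi^(n_1)...pi^(n_j) D^(n_1)...D^(n_j);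
 its matrix coefficient (Gamma^*)_beta^gamma is the coefficient of z^beta in Gamma^* z^gamma.
 The pair (j, (n_1,...,n_j)) is encoded as a list ns of length j.\<close>
definition Gamma_term :: "nat \<Rightarrow> (nat list \<Rightarrow> ps) \<Rightarrow> mi \<Rightarrow> mi \<Rightarrow> nat list list \<Rightarrow> real" where
  "Gamma_term d \<pi> \<beta> \<gamma> ns =
     (1 / fact (length ns)) *
     ps_times (foldr ps_times (map \<pi> ns) ps_one) (foldr (Dop d) ns (monom \<gamma>)) \<beta>"

definition Gamma_star :: "nat \<Rightarrow> (nat list \<Rightarrow> ps) \<Rightarrow> mi \<Rightarrow> mi \<Rightarrow> real" where
  "Gamma_star d \<pi> \<beta> \<gamma> = infsum (Gamma_term d \<pi> \<beta> \<gamma>) {ns. set ns \<subseteq> Idx d}"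

definition admissible :: "nat \<Rightarrow> real \<Rightarrow> (nat list \<Rightarrow> ps) \<Rightarrow> bool" where
  "admissible d \<alpha> \<pi> \<longleftrightarrow>
     (\<forall>n\<in>Idx d. Tstar d (\<pi> n) \<and> (\<forall>\<beta>. \<pi> n \<beta> \<noteq> 0 \<longrightarrow> hom \<alpha> \<beta> > nnorm n))"

end

theory Submission
  imports Defs
begin

lemma wsum_eq:
  assumes "finite S" "{v. \<beta> v \<noteq> 0} \<subseteq> S"
  shows "wsum w \<beta> = (\<Sum>v\<in>S. w v * real (\<beta> v))"
  unfolding wsum_def by (rule sum.mono_neutral_left) (use assms in auto)

lemma wsum_add:
  assumes "finite {v. \<beta>1 v \<noteq> 0}" "finite {v. \<beta>2 v \<noteq> 0}"
  shows "wsum w (\<lambda>v. \<beta>1 v + \<beta>2 v) = wsum w \<beta>1 + wsum w \<beta>2"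
proof -
  let ?S = "{v. \<beta>1 v \<noteq> 0} \<union> {v. \<beta>2 v \<noteq> 0}"
  have "wsum w (\<lambda>v. \<beta>1 v + \<beta>2 v) = (\<Sum>v\<in>?S. w v * real (\<beta>1 v + \<beta>2 v))"
    by (rule wsum_eq) (use assms in auto)
  also have "\<dots> = (\<Sum>v\<in>?S. w v * real (\<beta>1 v)) + (\<Sum>v\<in>?S. w v * real (\<beta>2 v))"
    by (simp add: sum.distrib distrib_left)
  also have "\<dots> = wsum w \<beta>1 + wsum w \<beta>2"
    using wsum_eq[of ?S \<beta>1 w] wsum_eq[of ?S \<beta>2 w] assms by auto
  finally show ?thesis .
qed

lemma wsum_upd:
  assumes "finite {v. \<beta> v \<noteq> 0}"
  shows "wsum w (\<beta>(u := x)) = wsum w \<beta> + w u * (real x - real (\<beta> u))"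
proof -
  let ?S = "insert u {v. \<beta> v \<noteq> 0}"
  have f: "finite ?S" using assms by auto
  have "wsum w (\<beta>(u := x)) = (\<Sum>v\<in>?S. w v * real ((\<beta>(u := x)) v))"
    by (rule wsum_eq) (use assms in auto)
  also have "\<dots> = w u * real ((\<beta>(u := x)) u) + (\<Sum>v\<in>?S - {u}. w v * real ((\<beta>(u := x)) v))"
    by (rule sum.remove[OF f]) simp
  also have "\<dots> = w u * real x + (\<Sum>v\<in>?S - {u}. w v * real (\<beta> v))"
    by (auto intro!: sum.cong)
  moreover have "wsum w \<beta> = (\<Sum>v\<in>?S. w v * real (\<beta> v))"
    by (rule wsum_eq[OF f]) auto
  moreover have "(\<Sum>v\<in>?S. w v * real (\<beta> v)) = w u * real (\<beta> u) + (\<Sum>v\<in>?S - {u}. w v * real (\<beta> v))"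
    by (rule sum.remove[OF f]) simp
  ultimately show ?thesis by (simp add: algebra_simps)
qed

lemma wsum_nonneg: "(\<And>v. 0 \<le> w v) \<Longrightarrow> 0 \<le> wsum w \<beta>"
  unfolding wsum_def by (auto intro: sum_nonneg)

lemma wsum_mono_mi:
  assumes "finite {v. \<beta> v \<noteq> 0}" "\<And>v. \<beta>' v \<le> \<beta> v" "\<And>v. 0 \<le> w v"
  shows "wsum w \<beta>' \<le> wsum w \<beta>"
proof -
  have s: "{v. \<beta>' v \<noteq> 0} \<subseteq> {v. \<beta> v \<noteq> 0}" using assms(2) by (metis (mono_tags) Collect_mono le_zero_eq)
  show ?thesis
    using wsum_eq[OF assms(1) s, of w] wsum_eq[OF assms(1) order_refl, of w] assms(2,3)
    by (auto intro!: sum_mono mult_left_mono)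
qed

lemma wsum_single:
  assumes "finite {v. \<beta> v \<noteq> 0}" "\<And>v. 0 \<le> w v"
  shows "w u * real (\<beta> u) \<le> wsum w \<beta>"
proof (cases "\<beta> u = 0")
  case True then show ?thesis using wsum_nonneg[of w \<beta>] assms by simp
next
  case False
  then show ?thesis unfolding wsum_def
    using member_le_sum[of u "{v. \<beta> v \<noteq> 0}" "\<lambda>v. w v * real (\<beta> v)"] assms by auto
qed

lemma wsum_lin: "wsum (\<lambda>v. a * f v + b * g v) \<beta> = a * wsum f \<beta> + b * wsum g \<beta>"
  unfolding wsum_def by (simp add: sum.distrib sum_distrib_left algebra_simps)

definition wbr :: "var \<Rightarrow> real" where
  "wbr v = (case v of VA k \<Rightarrow> real k | VB l \<Rightarrow> real l | VP n \<Rightarrow> -1)"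
definition wp :: "var \<Rightarrow> real" where
  "wp v = (case v of VP n \<Rightarrow> nnorm n | _ \<Rightarrow> 0)"
definition wl :: "real \<Rightarrow> var \<Rightarrow> real" where
  "wl lam v = (case v of VA _ \<Rightarrow> 1 | VB _ \<Rightarrow> 1 | VP n \<Rightarrow> lam * nnorm n)"

lemma hom_ws: "hom \<alpha> \<beta> = \<alpha> + wsum (\<lambda>v. \<alpha> * wbr v + 1 * wp v) \<beta>"
  unfolding hom_def bracket_def pnorm_def wsum_lin wbr_def wp_def by (simp add: algebra_simps)

lemma wlen_ws: "wlen lam \<beta> = wsum (wl lam) \<beta>"
  unfolding wlen_def wl_def by simp

lemma nnorm_nonneg: "0 \<le> nnorm n" unfolding nnorm_def by simp

lemma wl_nonneg: "0 \<le> lam \<Longrightarrow> 0 \<le> wl lam v"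
  unfolding wl_def by (cases v) (auto simp: nnorm_nonneg)

lemma hom_upd: "finite {v. \<beta> v \<noteq> 0} \<Longrightarrow>
   hom \<alpha> (\<beta>(u := x)) = hom \<alpha> \<beta> + (\<alpha> * wbr u + wp u) * (real x - real (\<beta> u))"
  unfolding hom_ws using wsum_upd[of \<beta> "\<lambda>v. \<alpha> * wbr v + 1 * wp v" u x] by simp

lemma wlen_upd: "finite {v. \<beta> v \<noteq> 0} \<Longrightarrow>
   wlen lam (\<beta>(u := x)) = wlen lam \<beta> + wl lam u * (real x - real (\<beta> u))"
  unfolding wlen_ws using wsum_upd[of \<beta> "wl lam" u x] by simp

lemma hom_add: "finite {v. \<beta>1 v \<noteq> 0} \<Longrightarrow> finite {v. \<beta>2 v \<noteq> 0} \<Longrightarrow>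
   hom \<alpha> (\<lambda>v. \<beta>1 v + \<beta>2 v) = hom \<alpha> \<beta>1 + hom \<alpha> \<beta>2 - \<alpha>"
  unfolding hom_ws using wsum_add[of \<beta>1 \<beta>2 "\<lambda>v. \<alpha> * wbr v + 1 * wp v"] by simp

lemma wlen_add: "finite {v. \<beta>1 v \<noteq> 0} \<Longrightarrow> finite {v. \<beta>2 v \<noteq> 0} \<Longrightarrow>
   wlen lam (\<lambda>v. \<beta>1 v + \<beta>2 v) = wlen lam \<beta>1 + wlen lam \<beta>2"
  unfolding wlen_ws using wsum_add[of \<beta>1 \<beta>2 "wl lam"] by simp

lemma wlen_mono: "0 \<le> lam \<Longrightarrow> finite {v. \<beta> v \<noteq> 0} \<Longrightarrow> (\<And>v. \<beta>' v \<le> \<beta> v) \<Longrightarrow>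
   wlen lam \<beta>' \<le> wlen lam \<beta>"
  unfolding wlen_ws by (rule wsum_mono_mi) (assumption+, rule wl_nonneg)

lemma wlen_nonneg: "0 \<le> lam \<Longrightarrow> 0 \<le> wlen lam \<beta>"
  unfolding wlen_ws by (rule wsum_nonneg) (rule wl_nonneg)

lemma fin_le: "finite {v. (\<beta>::mi) v \<noteq> 0} \<Longrightarrow> (\<And>v. (\<beta>'::mi) v \<le> \<beta> v) \<Longrightarrow> finite {v. \<beta>' v \<noteq> 0}"
proof -
  assume a: "finite {v. \<beta> v \<noteq> 0}" "\<And>v. \<beta>' v \<le> \<beta> v"
  have "{v. \<beta>' v \<noteq> 0} \<subseteq> {v. \<beta> v \<noteq> 0}"
  proof
    fix v assume "v \<in> {v. \<beta>' v \<noteq> 0}"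
    then show "v \<in> {v. \<beta> v \<noteq> 0}" using a(2)[of v] by auto
  qed
  then show ?thesis using a(1) finite_subset by blast
qed

lemma nnorm_zero: "nnorm (zeroidx d) = 0"
  unfolding nnorm_def zeroidx_def by (simp del: replicate_Suc add: replicate_Suc)

lemma Dop_step:
  assumes "Dop d n f \<delta> \<noteq> 0"
  obtains (P) "n \<noteq> zeroidx d" "f (\<delta>(VP n := \<delta> (VP n) + 1)) \<noteq> 0"
  | (A) k where "n = zeroidx d" "0 < \<delta> (VA (Suc k))"
      "f (\<delta>(VA (Suc k) := \<delta> (VA (Suc k)) - 1, VA k := \<delta> (VA k) + 1)) \<noteq> 0"
  | (B) l where "n = zeroidx d" "0 < \<delta> (VB (Suc l))"
      "f (\<delta>(VB (Suc l) := \<delta> (VB (Suc l)) - 1, VB l := \<delta> (VB l) + 1)) \<noteq> 0"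
proof (cases "n = zeroidx d")
  case False
  then show ?thesis using assms P unfolding Dop_def Dp_def by auto
next
  case True
  then have "D0 f \<delta> \<noteq> 0" using assms unfolding Dop_def by simp
  then have "(\<Sum>k\<in>{k. 0 < \<delta> (VA (Suc k))}. real (k + 1) * real (\<delta> (VA k) + 1) *
         f (\<delta>(VA (Suc k) := \<delta> (VA (Suc k)) - 1, VA k := \<delta> (VA k) + 1))) \<noteq> 0 \<or>
     (\<Sum>l\<in>{l. 0 < \<delta> (VB (Suc l))}. real (l + 1) * real (\<delta> (VB l) + 1) *
         f (\<delta>(VB (Suc l) := \<delta> (VB (Suc l)) - 1, VB l := \<delta> (VB l) + 1))) \<noteq> 0"
    unfolding D0_def by auto
  then show ?thesis
  proof
    assume "(\<Sum>k\<in>{k. 0 < \<delta> (VA (Suc k))}. real (k + 1) * real (\<delta> (VA k) + 1) *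
         f (\<delta>(VA (Suc k) := \<delta> (VA (Suc k)) - 1, VA k := \<delta> (VA k) + 1))) \<noteq> 0"
    from sum.not_neutral_contains_not_neutral[OF this] obtain k where
      "0 < \<delta> (VA (Suc k))" "f (\<delta>(VA (Suc k) := \<delta> (VA (Suc k)) - 1, VA k := \<delta> (VA k) + 1)) \<noteq> 0"
      by auto
    then show ?thesis using A True by blast
  next
    assume "(\<Sum>l\<in>{l. 0 < \<delta> (VB (Suc l))}. real (l + 1) * real (\<delta> (VB l) + 1) *
         f (\<delta>(VB (Suc l) := \<delta> (VB (Suc l)) - 1, VB l := \<delta> (VB l) + 1))) \<noteq> 0"
    from sum.not_neutral_contains_not_neutral[OF this] obtain l where
      "0 < \<delta> (VB (Suc l))" "f (\<delta>(VB (Suc l) := \<delta> (VB (Suc l)) - 1, VB l := \<delta> (VB l) + 1)) \<noteq> 0"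
      by auto
    then show ?thesis using B True by blast
  qed
qed

lemma D_inv:
  assumes "foldr (Dop d) ns (monom \<gamma>) \<delta> \<noteq> 0" "finite {v. \<gamma> v \<noteq> 0}"
  shows "finite {v. \<delta> v \<noteq> 0} \<and> wlen lam \<delta> = wlen lam \<gamma> - lam * (\<Sum>n\<leftarrow>ns. nnorm n)
     \<and> hom \<alpha> \<delta> = hom \<alpha> \<gamma> + \<alpha> * real (length ns) - (\<Sum>n\<leftarrow>ns. nnorm n)"
  using assms(1)
proof (induction ns arbitrary: \<delta>)
  case Nil
  then have "\<delta> = \<gamma>" by (simp add: monom_def split: if_splits)
  then show ?case using assms(2) by simp
next
  case (Cons n ns)
  let ?f = "foldr (Dop d) ns (monom \<gamma>)"
  from Cons.prems have "Dop d n ?f \<delta> \<noteq> 0" by simp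
  then show ?case
  proof (cases rule: Dop_step)
    case P
    let ?d = "\<delta>(VP n := \<delta> (VP n) + 1)"
    from Cons.IH[OF P(2)] have ih: "finite {v. ?d v \<noteq> 0}"
      "wlen lam ?d = wlen lam \<gamma> - lam * (\<Sum>n\<leftarrow>ns. nnorm n)"
      "hom \<alpha> ?d = hom \<alpha> \<gamma> + \<alpha> * real (length ns) - (\<Sum>n\<leftarrow>ns. nnorm n)" by blast+
    have fin: "finite {v. \<delta> v \<noteq> 0}" by (rule fin_le[OF ih(1)]) auto
    have w: "wlen lam ?d = wlen lam \<delta> + lam * nnorm n"
      using wlen_upd[OF fin, of lam "VP n" "\<delta> (VP n) + 1"] by (simp add: wl_def)
    have h: "hom \<alpha> ?d = hom \<alpha> \<delta> - \<alpha> + nnorm n"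
      using hom_upd[OF fin, of \<alpha> "VP n" "\<delta> (VP n) + 1"] by (simp add: wbr_def wp_def)
    show ?thesis using fin ih(2,3) w h by (simp add: algebra_simps)
  next
    case (A k)
    let ?d1 = "\<delta>(VA (Suc k) := \<delta> (VA (Suc k)) - 1)"
    let ?d = "?d1(VA k := \<delta> (VA k) + 1)"
    from Cons.IH[OF A(3)] have ih: "finite {v. ?d v \<noteq> 0}"
      "wlen lam ?d = wlen lam \<gamma> - lam * (\<Sum>n\<leftarrow>ns. nnorm n)"
      "hom \<alpha> ?d = hom \<alpha> \<gamma> + \<alpha> * real (length ns) - (\<Sum>n\<leftarrow>ns. nnorm n)" by blast+
    have fin: "finite {v. \<delta> v \<noteq> 0}"
      by (rule finite_subset[of _ "insert (VA (Suc k)) {v. ?d v \<noteq> 0}"]) (use ih(1) in auto)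
    have fin1: "finite {v. ?d1 v \<noteq> 0}"
      by (rule fin_le[OF fin]) auto
    have e: "real (\<delta> (VA (Suc k)) - 1) = real (\<delta> (VA (Suc k))) - 1" using A(2) by simp
    have w1: "wlen lam ?d1 = wlen lam \<delta> - 1"
      using wlen_upd[OF fin, of lam "VA (Suc k)" "\<delta> (VA (Suc k)) - 1"] e by (simp add: wl_def)
    have h1: "hom \<alpha> ?d1 = hom \<alpha> \<delta> - \<alpha> * real (Suc k)"
      using hom_upd[OF fin, of \<alpha> "VA (Suc k)" "\<delta> (VA (Suc k)) - 1"] e by (simp add: wbr_def wp_def)
    have v: "?d1 (VA k) = \<delta> (VA k)" by simp
    have w2: "wlen lam ?d = wlen lam ?d1 + 1"
      using wlen_upd[OF fin1, of lam "VA k" "\<delta> (VA k) + 1"] unfolding v by (simp add: wl_def del: fun_upd_apply)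
    have h2: "hom \<alpha> ?d = hom \<alpha> ?d1 + \<alpha> * real k"
      using hom_upd[OF fin1, of \<alpha> "VA k" "\<delta> (VA k) + 1"] unfolding v by (simp add: wbr_def wp_def del: fun_upd_apply)
    show ?thesis using fin ih(2,3) w1 w2 h1 h2 A(1) by (simp add: nnorm_zero algebra_simps)
  next
    case (B k)
    let ?d1 = "\<delta>(VB (Suc k) := \<delta> (VB (Suc k)) - 1)"
    let ?d = "?d1(VB k := \<delta> (VB k) + 1)"
    from Cons.IH[OF B(3)] have ih: "finite {v. ?d v \<noteq> 0}"
      "wlen lam ?d = wlen lam \<gamma> - lam * (\<Sum>n\<leftarrow>ns. nnorm n)"
      "hom \<alpha> ?d = hom \<alpha> \<gamma> + \<alpha> * real (length ns) - (\<Sum>n\<leftarrow>ns. nnorm n)" by blast+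
    have fin: "finite {v. \<delta> v \<noteq> 0}"
      by (rule finite_subset[of _ "insert (VB (Suc k)) {v. ?d v \<noteq> 0}"]) (use ih(1) in auto)
    have fin1: "finite {v. ?d1 v \<noteq> 0}"
      by (rule fin_le[OF fin]) auto
    have e: "real (\<delta> (VB (Suc k)) - 1) = real (\<delta> (VB (Suc k))) - 1" using B(2) by simp
    have w1: "wlen lam ?d1 = wlen lam \<delta> - 1"
      using wlen_upd[OF fin, of lam "VB (Suc k)" "\<delta> (VB (Suc k)) - 1"] e by (simp add: wl_def)
    have h1: "hom \<alpha> ?d1 = hom \<alpha> \<delta> - \<alpha> * real (Suc k)"
      using hom_upd[OF fin, of \<alpha> "VB (Suc k)" "\<delta> (VB (Suc k)) - 1"] e by (simp add: wbr_def wp_def)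
    have v: "?d1 (VB k) = \<delta> (VB k)" by simp
    have w2: "wlen lam ?d = wlen lam ?d1 + 1"
      using wlen_upd[OF fin1, of lam "VB k" "\<delta> (VB k) + 1"] unfolding v by (simp add: wl_def del: fun_upd_apply)
    have h2: "hom \<alpha> ?d = hom \<alpha> ?d1 + \<alpha> * real k"
      using hom_upd[OF fin1, of \<alpha> "VB k" "\<delta> (VB k) + 1"] unfolding v by (simp add: wbr_def wp_def del: fun_upd_apply)
    show ?thesis using fin ih(2,3) w1 w2 h1 h2 B(1) by (simp add: nnorm_zero algebra_simps)
  qed
qed

lemma D_b:
  assumes "foldr (Dop d) ns (monom \<gamma>) \<delta> \<noteq> 0" "\<exists>l. \<gamma> (VB l) > 0"
  shows "\<exists>l. \<delta> (VB l) > 0"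
  using assms(1)
proof (induction ns arbitrary: \<delta>)
  case Nil
  then have "\<delta> = \<gamma>" by (simp add: monom_def split: if_splits)
  then show ?case using assms(2) by simp
next
  case (Cons n ns)
  let ?f = "foldr (Dop d) ns (monom \<gamma>)"
  from Cons.prems have "Dop d n ?f \<delta> \<noteq> 0" by simp
  then show ?case
  proof (cases rule: Dop_step)
    case P then show ?thesis using Cons.IH[OF P(2)] by auto
  next
    case (A k) then show ?thesis using Cons.IH[OF A(3)] by auto
  next
    case (B l) then show ?thesis by auto
  qed
qed

lemma ps_times_nz:
  assumes "ps_times f g \<beta> \<noteq> 0"
  shows "\<exists>\<beta>1. (\<forall>v. \<beta>1 v \<le> \<beta> v) \<and> f \<beta>1 \<noteq> 0 \<and> g (\<lambda>v. \<beta> v - \<beta>1 v) \<noteq> 0"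
  using sum.not_neutral_contains_not_neutral[OF assms[unfolded ps_times_def]] by auto

lemma wsum_gidx: "wsum w (gidx m) = w (VP m)"
proof -
  have "{v. gidx m v \<noteq> 0} = {VP m}" by (auto simp: gidx_def)
  then show ?thesis unfolding wsum_def by (simp add: gidx_def)
qed

lemma factor:
  assumes adm: "admissible d \<alpha> \<pi>" and n: "n \<in> Idx d" and nz: "\<pi> n \<beta>' \<noteq> 0"
    and a: "0 < \<alpha>" "\<alpha> < 1" and l: "0 < lam" "lam < 1/2"
  shows "finite {v. \<beta>' v \<noteq> 0} \<and> lam * nnorm n < wlen lam \<beta>' \<and> nnorm n < hom \<alpha> \<beta>'"
proof -
  have T: "Tstar d (\<pi> n)" and H: "hom \<alpha> \<beta>' > nnorm n"
    using adm n nz unfolding admissible_def by auto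
  then have mi: "multiindex d \<beta>'" and pop: "populated d \<beta>'" using nz unfolding Tstar_def by auto
  have fin: "finite {v. \<beta>' v \<noteq> 0}" using mi unfolding multiindex_def by auto
  have "lam * nnorm n < wlen lam \<beta>'"
  proof (cases "\<exists>m\<in>NZIdx d. \<beta>' = gidx m")
    case True
    then obtain m where m: "\<beta>' = gidx m" by auto
    have "hom \<alpha> \<beta>' = nnorm m" unfolding m hom_def bracket_def pnorm_def wsum_gidx by simp
    moreover have "wlen lam \<beta>' = lam * nnorm m" unfolding m wlen_def wsum_gidx by simp
    ultimately show ?thesis using H l by simp
  next
    case False
    then obtain l0 where b: "\<beta>' (VB l0) > 0" using pop unfolding populated_def by auto
    define wA :: "var \<Rightarrow> real" where "wA v = (case v of VA _ \<Rightarrow> 1 | _ \<Rightarrow> 0)" for v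
    define wB :: "var \<Rightarrow> real" where "wB v = (case v of VB _ \<Rightarrow> 1 | _ \<Rightarrow> 0)" for v
    define wP :: "var \<Rightarrow> real" where "wP v = (case v of VP _ \<Rightarrow> 1 | _ \<Rightarrow> 0)" for v
    define wab :: "var \<Rightarrow> real" where "wab v = (case v of VA k \<Rightarrow> real k | VB l \<Rightarrow> real l | VP _ \<Rightarrow> 0)" for v
    have e1: "(\<lambda>v. case v of VA k \<Rightarrow> real k | VB l \<Rightarrow> real l | VP n \<Rightarrow> -1) = (\<lambda>v. 1 * wab v + (-1) * wP v)"
      by (rule ext, case_tac v) (auto simp: wab_def wP_def)
    have e2: "(\<lambda>v. case v of VA _ \<Rightarrow> 0 | VB _ \<Rightarrow> 1 | VP _ \<Rightarrow> 1) = (\<lambda>v. 1 * wB v + 1 * wP v)"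
      by (rule ext, case_tac v) (auto simp: wB_def wP_def)
    have e3: "(\<lambda>v. case v of VA k \<Rightarrow> real k | VB l \<Rightarrow> real l | VP _ \<Rightarrow> 0) = wab"
      by (rule ext, case_tac v) (auto simp: wab_def)
    have e4: "(\<lambda>v. case v of VA _ \<Rightarrow> 1 | VB _ \<Rightarrow> 1 | VP n \<Rightarrow> lam * nnorm n)
        = (\<lambda>v. 1 * (\<lambda>v. 1 * wA v + 1 * wB v) v + lam * wp v)"
      by (rule ext, case_tac v) (auto simp: wA_def wB_def wp_def)
    have e5: "(\<lambda>v. case v of VP n \<Rightarrow> nnorm n | _ \<Rightarrow> 0) = wp"
      by (rule ext, case_tac v) (auto simp: wp_def)
    have popeq: "1 + wsum wab \<beta>' = wsum wB \<beta>' + wsum wP \<beta>'"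
      using pop unfolding populated_def e2 e3 wsum_lin by simp
    have hom_eq: "hom \<alpha> \<beta>' = \<alpha> * wsum wB \<beta>' + wsum wp \<beta>'"
      unfolding hom_def bracket_def pnorm_def e1 e5 wsum_lin using popeq by (simp add: algebra_simps)
    have wl_eq: "wlen lam \<beta>' = wsum wA \<beta>' + wsum wB \<beta>' + lam * wsum wp \<beta>'"
      unfolding wlen_def e4 wsum_lin by simp
    have NA: "0 \<le> wsum wA \<beta>'" by (rule wsum_nonneg) (simp add: wA_def split: var.split)
    have wBn: "\<And>v. 0 \<le> wB v" by (simp add: wB_def split: var.split)
    have "wB (VB l0) * real (\<beta>' (VB l0)) \<le> wsum wB \<beta>'" by (rule wsum_single[OF fin wBn])
    then have NB: "1 \<le> wsum wB \<beta>'" using b by (simp add: wB_def)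
    have la: "lam * \<alpha> \<le> 1" by (intro mult_le_one) (use a l in auto)
    have "lam * \<alpha> * wsum wB \<beta>' \<le> wsum wB \<beta>'"
      using mult_right_mono[OF la, of "wsum wB \<beta>'"] NB by simp
    moreover have "lam * nnorm n < lam * hom \<alpha> \<beta>'" using H l by simp
    ultimately show ?thesis unfolding wl_eq using hom_eq NA by (simp add: algebra_simps)
  qed
  then show ?thesis using fin H by simp
qed

lemma P_inv:
  assumes adm: "admissible d \<alpha> \<pi>" and a: "0 < \<alpha>" "\<alpha> < 1" and l: "0 < lam" "lam < 1/2"
  shows "set ns \<subseteq> Idx d \<Longrightarrow> foldr ps_times (map \<pi> ns) ps_one \<beta>1 \<noteq> 0 \<Longrightarrow>
    finite {v. \<beta>1 v \<noteq> 0} \<and> lam * (\<Sum>n\<leftarrow>ns. nnorm n) \<le> wlen lam \<beta>1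
     \<and> \<alpha> + (\<Sum>n\<leftarrow>ns. nnorm n) - \<alpha> * real (length ns) \<le> hom \<alpha> \<beta>1
     \<and> (ns \<noteq> [] \<longrightarrow> lam * (\<Sum>n\<leftarrow>ns. nnorm n) < wlen lam \<beta>1
        \<and> \<alpha> + (\<Sum>n\<leftarrow>ns. nnorm n) - \<alpha> * real (length ns) < hom \<alpha> \<beta>1)"
proof (induction ns arbitrary: \<beta>1)
  case Nil
  then have "\<beta>1 = (\<lambda>_. 0)" by (simp add: ps_one_def monom_def split: if_splits)
  then show ?case unfolding hom_def bracket_def pnorm_def wlen_def wsum_def by simp
next
  case (Cons n ns)
  from Cons.prems(2) have "ps_times (\<pi> n) (foldr ps_times (map \<pi> ns) ps_one) \<beta>1 \<noteq> 0" by simp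
  from ps_times_nz[OF this] obtain \<beta>2 where le: "\<forall>v. \<beta>2 v \<le> \<beta>1 v" and nz: "\<pi> n \<beta>2 \<noteq> 0"
    and r: "foldr ps_times (map \<pi> ns) ps_one (\<lambda>v. \<beta>1 v - \<beta>2 v) \<noteq> 0" by blast
  have nI: "n \<in> Idx d" "set ns \<subseteq> Idx d" using Cons.prems(1) by auto
  have f: "finite {v. \<beta>2 v \<noteq> 0}" "lam * nnorm n < wlen lam \<beta>2" "nnorm n < hom \<alpha> \<beta>2"
    using factor[OF adm nI(1) nz a l] by auto
  have ih: "finite {v. \<beta>1 v - \<beta>2 v \<noteq> 0}"
     "lam * (\<Sum>n\<leftarrow>ns. nnorm n) \<le> wlen lam (\<lambda>v. \<beta>1 v - \<beta>2 v)"
     "\<alpha> + (\<Sum>n\<leftarrow>ns. nnorm n) - \<alpha> * real (length ns) \<le> hom \<alpha> (\<lambda>v. \<beta>1 v - \<beta>2 v)"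
    using Cons.IH[OF nI(2) r] by blast+
  have eq: "\<beta>1 = (\<lambda>v. \<beta>2 v + (\<beta>1 v - \<beta>2 v))" using le by auto
  have fin: "finite {v. \<beta>1 v \<noteq> 0}"
    by (rule finite_subset[of _ "{v. \<beta>2 v \<noteq> 0} \<union> {v. \<beta>1 v - \<beta>2 v \<noteq> 0}"]) (use f(1) ih(1) in auto)
  have w: "wlen lam \<beta>1 = wlen lam \<beta>2 + wlen lam (\<lambda>v. \<beta>1 v - \<beta>2 v)"
    by (subst eq, rule wlen_add[OF f(1) ih(1)])
  have h: "hom \<alpha> \<beta>1 = hom \<alpha> \<beta>2 + hom \<alpha> (\<lambda>v. \<beta>1 v - \<beta>2 v) - \<alpha>"
    by (subst eq, rule hom_add[OF f(1) ih(1)])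
  show ?case using fin w h f(2,3) ih(2,3) by (simp add: algebra_simps)
qed

lemma fin_below:
  assumes "finite {v. (\<beta>::mi) v \<noteq> 0}"
  shows "finite {\<beta>1::mi. \<forall>v. \<beta>1 v \<le> \<beta> v}"
proof -
  let ?S = "{v. \<beta> v \<noteq> 0}"
  let ?A = "{\<beta>1::mi. \<forall>v. \<beta>1 v \<le> \<beta> v}"
  have inj: "inj_on (\<lambda>f. restrict f ?S) ?A"
  proof (rule inj_onI)
    fix f g assume f: "f \<in> ?A" and g: "g \<in> ?A" and e: "restrict f ?S = restrict g ?S"
    show "f = g"
    proof
      fix v show "f v = g v"
      proof (cases "v \<in> ?S")
        case True then show ?thesis using fun_cong[OF e, of v] by simp
      next
        case False then show ?thesis using f g by (metis (mono_tags, lifting) le_zero_eq mem_Collect_eq)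
      qed
    qed
  qed
  have "(\<lambda>f. restrict f ?S) ` ?A \<subseteq> (\<Pi>\<^sub>E v\<in>?S. {..\<beta> v})"
  proof (rule image_subsetI)
    fix f assume "f \<in> ?A"
    then show "restrict f ?S \<in> (\<Pi>\<^sub>E v\<in>?S. {..\<beta> v})" unfolding restrict_PiE_iff by auto
  qed
  moreover have "finite (\<Pi>\<^sub>E v\<in>?S. {..\<beta> v})" by (rule finite_PiE) (use assms in auto)
  ultimately have "finite ((\<lambda>f. restrict f ?S) ` ?A)" by (rule finite_subset)
  then show ?thesis using finite_imageD[OF _ inj] by blast
qed

lemma term_nil: "finite {v. \<beta> v \<noteq> 0} \<Longrightarrow> Gamma_term d \<pi> \<beta> \<gamma> [] = (if \<beta> = \<gamma> then 1 else 0)"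
proof -
  assume fin: "finite {v. \<beta> v \<noteq> 0}"
  have "Gamma_term d \<pi> \<beta> \<gamma> [] = (\<Sum>\<beta>1\<in>{\<beta>1. \<forall>v. \<beta>1 v \<le> \<beta> v}. ps_one \<beta>1 * monom \<gamma> (\<lambda>v. \<beta> v - \<beta>1 v))"
    unfolding Gamma_term_def ps_times_def by simp
  also have "\<dots> = (\<Sum>\<beta>1\<in>{\<beta>1. \<forall>v. \<beta>1 v \<le> \<beta> v}. if \<beta>1 = (\<lambda>_. 0) then monom \<gamma> \<beta> else 0)"
    by (rule sum.cong) (auto simp: ps_one_def monom_def)
  also have "\<dots> = monom \<gamma> \<beta>" using fin_below[OF fin] by (simp add: sum.delta)
  finally show ?thesis by (simp add: monom_def)
qed

lemma term_c:
  assumes adm: "admissible d \<alpha> \<pi>" and a: "0 < \<alpha>" "\<alpha> < 1" and l: "0 < lam" "lam < 1/2"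
    and ns: "set ns \<subseteq> Idx d" "ns \<noteq> []" and nz: "Gamma_term d \<pi> \<beta> \<gamma> ns \<noteq> 0"
    and fb: "finite {v. \<beta> v \<noteq> 0}" and fg: "finite {v. \<gamma> v \<noteq> 0}"
  shows "wlen lam \<gamma> < wlen lam \<beta> \<and> hom \<alpha> \<gamma> < hom \<alpha> \<beta>"
proof -
  have "ps_times (foldr ps_times (map \<pi> ns) ps_one) (foldr (Dop d) ns (monom \<gamma>)) \<beta> \<noteq> 0"
    using nz unfolding Gamma_term_def by auto
  from ps_times_nz[OF this] obtain \<beta>1 where le: "\<forall>v. \<beta>1 v \<le> \<beta> v"
    and p: "foldr ps_times (map \<pi> ns) ps_one \<beta>1 \<noteq> 0"
    and q: "foldr (Dop d) ns (monom \<gamma>) (\<lambda>v. \<beta> v - \<beta>1 v) \<noteq> 0" by blast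
  have P: "finite {v. \<beta>1 v \<noteq> 0}" "lam * (\<Sum>n\<leftarrow>ns. nnorm n) < wlen lam \<beta>1"
       "\<alpha> + (\<Sum>n\<leftarrow>ns. nnorm n) - \<alpha> * real (length ns) < hom \<alpha> \<beta>1"
    using P_inv[OF adm a l ns(1) p] ns(2) by blast+
  have D: "finite {v. \<beta> v - \<beta>1 v \<noteq> 0}" "wlen lam (\<lambda>v. \<beta> v - \<beta>1 v) = wlen lam \<gamma> - lam * (\<Sum>n\<leftarrow>ns. nnorm n)"
     "hom \<alpha> (\<lambda>v. \<beta> v - \<beta>1 v) = hom \<alpha> \<gamma> + \<alpha> * real (length ns) - (\<Sum>n\<leftarrow>ns. nnorm n)"
    using D_inv[OF q fg, of lam \<alpha>] by blast+
  have eq: "\<beta> = (\<lambda>v. \<beta>1 v + (\<beta> v - \<beta>1 v))" using le by auto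
  have w: "wlen lam \<beta> = wlen lam \<beta>1 + wlen lam (\<lambda>v. \<beta> v - \<beta>1 v)"
    by (subst eq, rule wlen_add[OF P(1) D(1)])
  have h: "hom \<alpha> \<beta> = hom \<alpha> \<beta>1 + hom \<alpha> (\<lambda>v. \<beta> v - \<beta>1 v) - \<alpha>"
    by (subst eq, rule hom_add[OF P(1) D(1)])
  show ?thesis using w h P(2,3) D(2,3) by (simp add: algebra_simps)
qed

lemma ps_times_cong:
  "(\<And>\<beta>1. \<forall>v. \<beta>1 v \<le> \<beta> v \<Longrightarrow> f \<beta>1 * g (\<lambda>v. \<beta> v - \<beta>1 v) = f' \<beta>1 * g' (\<lambda>v. \<beta> v - \<beta>1 v))
   \<Longrightarrow> ps_times f g \<beta> = ps_times f' g' \<beta>"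
  unfolding ps_times_def by (rule sum.cong) auto

lemma prod_agree:
  "(\<forall>n\<in>set ns. \<forall>\<beta>'. (\<forall>v. \<beta>' v \<le> \<beta>1 v) \<longrightarrow> \<pi>' n \<beta>' = \<pi> n \<beta>') \<Longrightarrow>
   foldr ps_times (map \<pi>' ns) ps_one \<beta>1 = foldr ps_times (map \<pi> ns) ps_one \<beta>1"
proof (induction ns arbitrary: \<beta>1)
  case Nil then show ?case by simp
next
  case (Cons n ns)
  show ?case
    unfolding list.map foldr_Cons o_def
  proof (rule ps_times_cong)
    fix \<beta>2 assume le: "\<forall>v. \<beta>2 v \<le> \<beta>1 v"
    have "\<pi>' n \<beta>2 = \<pi> n \<beta>2" using Cons.prems le by auto
    moreover have "foldr ps_times (map \<pi>' ns) ps_one (\<lambda>v. \<beta>1 v - \<beta>2 v)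
        = foldr ps_times (map \<pi> ns) ps_one (\<lambda>v. \<beta>1 v - \<beta>2 v)"
    proof (rule Cons.IH)
      show "\<forall>n\<in>set ns. \<forall>\<beta>'. (\<forall>v. \<beta>' v \<le> \<beta>1 v - \<beta>2 v) \<longrightarrow> \<pi>' n \<beta>' = \<pi> n \<beta>'"
        using Cons.prems by (meson diff_le_self le_trans list.set_intros(2))
    qed
    ultimately show "\<pi>' n \<beta>2 * foldr ps_times (map \<pi>' ns) ps_one (\<lambda>v. \<beta>1 v - \<beta>2 v) =
          \<pi> n \<beta>2 * foldr ps_times (map \<pi> ns) ps_one (\<lambda>v. \<beta>1 v - \<beta>2 v)" by simp
  qed
qed

lemma mi_le: "multiindex d \<beta> \<Longrightarrow> (\<And>v. \<beta>' v \<le> \<beta> v) \<Longrightarrow> multiindex d \<beta>'"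
  unfolding multiindex_def
proof (intro conjI allI impI)
  assume a: "finite {v. \<beta> v \<noteq> 0} \<and> (\<forall>n. \<beta> (VP n) \<noteq> 0 \<longrightarrow> n \<in> NZIdx d)" "\<And>v. \<beta>' v \<le> \<beta> v"
  show "finite {v. \<beta>' v \<noteq> 0}" using fin_le[of \<beta> \<beta>'] a by blast
  fix n assume "\<beta>' (VP n) \<noteq> 0"
  then have "\<beta> (VP n) \<noteq> 0" using a(2)[of "VP n"] by auto
  then show "n \<in> NZIdx d" using a(1) by blast
qed

theorem mainTheorem5:
  fixes d :: nat and \<alpha> lam :: real and \<pi> :: "nat list \<Rightarrow> ps" and \<beta> \<gamma> :: mi
  assumes "0 < \<alpha>" "\<alpha> < 1" "0 < lam" "lam < 1/2"
    and "admissible d \<alpha> \<pi>"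
    and "multiindex d \<beta>" "multiindex d \<gamma>"
  shows
    "(\<forall>\<pi>'. admissible d \<alpha> \<pi>' \<longrightarrow>
        (\<forall>n\<in>Idx d. \<forall>\<beta>'. multiindex d \<beta>' \<and> wlen lam \<beta>' \<le> wlen lam \<beta> \<longrightarrow> \<pi>' n \<beta>' = \<pi> n \<beta>')
        \<longrightarrow> Gamma_star d \<pi>' \<beta> \<gamma> = Gamma_star d \<pi> \<beta> \<gamma>)
     \<and> ((\<exists>l. \<gamma> (VB l) > 0) \<longrightarrow>
        (\<forall>\<pi>'. admissible d \<alpha> \<pi>' \<longrightarrow>
          (\<forall>n\<in>Idx d. \<forall>\<beta>'. multiindex d \<beta>' \<and> wlen lam \<beta>' < wlen lam \<beta> \<longrightarrow> \<pi>' n \<beta>' = \<pi> n \<beta>')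
          \<longrightarrow> Gamma_star d \<pi>' \<beta> \<gamma> = Gamma_star d \<pi> \<beta> \<gamma>))
     \<and> (Gamma_star d \<pi> \<beta> \<gamma> - (if \<beta> = \<gamma> then 1 else 0) \<noteq> 0 \<longrightarrow>
          wlen lam \<gamma> < wlen lam \<beta> \<and> hom \<alpha> \<gamma> < hom \<alpha> \<beta>)"
proof (intro conjI allI impI)
  have fb: "finite {v. \<beta> v \<noteq> 0}" using assms(6) unfolding multiindex_def by auto
  have fg: "finite {v. \<gamma> v \<noteq> 0}" using assms(7) unfolding multiindex_def by auto
  have lam0: "0 \<le> lam" using assms(3) by simp
  {
    fix \<pi>' assume H: "\<forall>n\<in>Idx d. \<forall>\<beta>'. multiindex d \<beta>' \<and> wlen lam \<beta>' \<le> wlen lam \<beta> \<longrightarrow> \<pi>' n \<beta>' = \<pi> n \<beta>'"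
    show "Gamma_star d \<pi>' \<beta> \<gamma> = Gamma_star d \<pi> \<beta> \<gamma>"
      unfolding Gamma_star_def
    proof (rule infsum_cong)
      fix ns assume ns: "ns \<in> {ns. set ns \<subseteq> Idx d}"
      show "Gamma_term d \<pi>' \<beta> \<gamma> ns = Gamma_term d \<pi> \<beta> \<gamma> ns"
        unfolding Gamma_term_def
      proof (rule arg_cong2[where f="(*)"], rule refl, rule ps_times_cong)
        fix \<beta>1 assume le: "\<forall>v. \<beta>1 v \<le> \<beta> v"
        have "foldr ps_times (map \<pi>' ns) ps_one \<beta>1 = foldr ps_times (map \<pi> ns) ps_one \<beta>1"
        proof (rule prod_agree, intro ballI allI impI)
          fix n \<beta>' assume n: "n \<in> set ns" and le': "\<forall>v. \<beta>' v \<le> \<beta>1 v"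
          have le2: "\<And>v. \<beta>' v \<le> \<beta> v" using le le' le_trans by blast
          show "\<pi>' n \<beta>' = \<pi> n \<beta>'"
            using H n ns mi_le[OF assms(6) le2] wlen_mono[OF lam0 fb le2] by auto
        qed
        then show "foldr ps_times (map \<pi>' ns) ps_one \<beta>1 * foldr (Dop d) ns (monom \<gamma>) (\<lambda>v. \<beta> v - \<beta>1 v) =
          foldr ps_times (map \<pi> ns) ps_one \<beta>1 * foldr (Dop d) ns (monom \<gamma>) (\<lambda>v. \<beta> v - \<beta>1 v)" by simp
      qed
    qed
  }
  {
    assume b: "\<exists>l. \<gamma> (VB l) > 0"
    fix \<pi>' assume H: "\<forall>n\<in>Idx d. \<forall>\<beta>'. multiindex d \<beta>' \<and> wlen lam \<beta>' < wlen lam \<beta> \<longrightarrow> \<pi>' n \<beta>' = \<pi> n \<beta>'"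
    show "Gamma_star d \<pi>' \<beta> \<gamma> = Gamma_star d \<pi> \<beta> \<gamma>"
      unfolding Gamma_star_def
    proof (rule infsum_cong)
      fix ns assume ns: "ns \<in> {ns. set ns \<subseteq> Idx d}"
      show "Gamma_term d \<pi>' \<beta> \<gamma> ns = Gamma_term d \<pi> \<beta> \<gamma> ns"
        unfolding Gamma_term_def
      proof (rule arg_cong2[where f="(*)"], rule refl, rule ps_times_cong)
        fix \<beta>1 assume le: "\<forall>v. \<beta>1 v \<le> \<beta> v"
        show "foldr ps_times (map \<pi>' ns) ps_one \<beta>1 * foldr (Dop d) ns (monom \<gamma>) (\<lambda>v. \<beta> v - \<beta>1 v) =
          foldr ps_times (map \<pi> ns) ps_one \<beta>1 * foldr (Dop d) ns (monom \<gamma>) (\<lambda>v. \<beta> v - \<beta>1 v)"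
        proof (cases "foldr (Dop d) ns (monom \<gamma>) (\<lambda>v. \<beta> v - \<beta>1 v) = 0")
          case True then show ?thesis by simp
        next
          case False
          obtain l where bl: "(\<beta> (VB l) - \<beta>1 (VB l)) > 0" using D_b[OF False b] by auto
          have f1: "finite {v. \<beta>1 v \<noteq> 0}" by (rule fin_le[OF fb]) (use le in auto)
          have f2: "finite {v. \<beta> v - \<beta>1 v \<noteq> 0}" by (rule fin_le[OF fb]) auto
          have "wl lam (VB l) * real (\<beta> (VB l) - \<beta>1 (VB l)) \<le> wsum (wl lam) (\<lambda>v. \<beta> v - \<beta>1 v)"
            by (rule wsum_single[OF f2 wl_nonneg[OF lam0]])
          then have pos: "0 < wlen lam (\<lambda>v. \<beta> v - \<beta>1 v)" using bl unfolding wlen_ws by (simp add: wl_def)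
          have eq: "\<beta> = (\<lambda>v. \<beta>1 v + (\<beta> v - \<beta>1 v))" using le by auto
          have w: "wlen lam \<beta> = wlen lam \<beta>1 + wlen lam (\<lambda>v. \<beta> v - \<beta>1 v)"
            by (subst eq, rule wlen_add[OF f1 f2])
          have "foldr ps_times (map \<pi>' ns) ps_one \<beta>1 = foldr ps_times (map \<pi> ns) ps_one \<beta>1"
          proof (rule prod_agree, intro ballI allI impI)
            fix n \<beta>' assume n: "n \<in> set ns" and le': "\<forall>v. \<beta>' v \<le> \<beta>1 v"
            have le2: "\<And>v. \<beta>' v \<le> \<beta> v" using le le' le_trans by blast
            have "wlen lam \<beta>' \<le> wlen lam \<beta>1" using wlen_mono[OF lam0 f1] le' by blast
            then have "wlen lam \<beta>' < wlen lam \<beta>" using w pos by linarith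
            then show "\<pi>' n \<beta>' = \<pi> n \<beta>'"
              using H n ns mi_le[OF assms(6) le2] by auto
          qed
          then show ?thesis by simp
        qed
      qed
    qed
  }
  have C: "wlen lam \<gamma> < wlen lam \<beta> \<and> hom \<alpha> \<gamma> < hom \<alpha> \<beta>"
    if ne: "Gamma_star d \<pi> \<beta> \<gamma> - (if \<beta> = \<gamma> then 1 else 0) \<noteq> 0"
    proof (rule ccontr)
      assume nc: "\<not> (wlen lam \<gamma> < wlen lam \<beta> \<and> hom \<alpha> \<gamma> < hom \<alpha> \<beta>)"
      have z: "Gamma_term d \<pi> \<beta> \<gamma> ns = 0" if "ns \<in> {ns. set ns \<subseteq> Idx d}" "ns \<noteq> []" for ns
        using term_c[OF assms(5,1,2,3,4) _ that(2) _ fb fg] that(1) nc by auto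
      have "Gamma_star d \<pi> \<beta> \<gamma> = infsum (Gamma_term d \<pi> \<beta> \<gamma>) {[]}"
        unfolding Gamma_star_def by (rule infsum_cong_neutral) (use z in auto)
      also have "\<dots> = (if \<beta> = \<gamma> then 1 else 0)" using term_nil[OF fb] by simp
      finally show False using ne by simp
    qed
  {
    assume "Gamma_star d \<pi> \<beta> \<gamma> - (if \<beta> = \<gamma> then 1 else 0) \<noteq> 0"
    then show "wlen lam \<gamma> < wlen lam \<beta>" using C by blast
  }
  {
    assume "Gamma_star d \<pi> \<beta> \<gamma> - (if \<beta> = \<gamma> then 1 else 0) \<noteq> 0"
    then show "hom \<alpha> \<gamma> < hom \<alpha> \<beta>" using C by blast
  }
qed

end
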